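(* Let $x$ be a real number. The number of primes $p$ for which $P^+(p^2-1)\le x$ is at most $3\cdot 7^{1+2\pi(x)}$.
   Context: $P^+(n)$ denotes the largest prime divisor of an integer $n\ge 2$ (with $P^+(1)=1$), and $\pi(x)$ is the number of primes not exceeding $x$. *)

theory Defs
  imports "HOL-Computational_Algebra.Primes" Complex_Main
begin

text \<open>Largest prime divisor of n, with the convention P^+(1) = 1 (also used for n = 0,
which never occurs in the statement since p^2 - 1 \<ge> 3 for primes p).\<close>
definition Pplus :: "nat \<Rightarrow> nat" where
  "Pplus n = (if n \<le> 1 then 1 else Max (prime_factors n))"

definition prime_pi :: "real \<Rightarrow> nat" where
  "prime_pi x = card {p::nat. prime p \<and> real p \<le> x}"

end

theory Submission
  imports Defs "HOL-Computational_Algebra.Squarefree"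
begin

primrec pxy :: "int \<Rightarrow> int \<Rightarrow> int \<Rightarrow> nat \<Rightarrow> int \<times> int" where
  "pxy D a b 0 = (1, 0)"
| "pxy D a b (Suc n) = (a * fst (pxy D a b n) + D * b * snd (pxy D a b n),
                        b * fst (pxy D a b n) + a * snd (pxy D a b n))"

locale pellf =
  fixes D a b :: int
  assumes Dpos: "D > 0" and ab: "a^2 - D*b^2 = 1" and apos: "a > 0" and bpos: "b > 0"
  and bmin: "\<And>x y. x > 0 \<Longrightarrow> y > 0 \<Longrightarrow> x^2 - D*y^2 = 1 \<Longrightarrow> b \<le> y"
begin

definition X where "X n = fst (pxy D a b n)"
definition Y where "Y n = snd (pxy D a b n)"

lemma X0[simp]: "X 0 = 1" and Y0[simp]: "Y 0 = 0"
  and XS: "X (Suc n) = a * X n + D * b * Y n" and YS: "Y (Suc n) = b * X n + a * Y n"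
  by (simp_all add: X_def Y_def)

lemma norm: "X n ^ 2 - D * Y n ^ 2 = 1"
proof (induction n)
  case 0 then show ?case by simp
next
  case (Suc n)
  have "X (Suc n) ^ 2 - D * Y (Suc n) ^ 2 = (a^2 - D*b^2) * (X n ^ 2 - D * Y n ^ 2)"
    unfolding XS YS by (simp add: power2_eq_square algebra_simps)
  then show ?case using Suc ab by simp
qed

lemma a2: "a \<ge> 2"
proof -
  have "D * b^2 > 0" using Dpos bpos by simp
  then have "a^2 > 1" using ab by linarith
  then have "a > 1" using apos by (smt (verit) one_le_power power_one)
  then show ?thesis by simp
qed

lemma pos: "X n \<ge> 1 \<and> Y n \<ge> 0"
proof (induction n)
  case 0 then show ?case by simp
next
  case (Suc n)
  have "D * b * Y n \<ge> 0" using Suc Dpos bpos by simp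
  moreover have "a * X n \<ge> 1" using Suc a2 by (smt (verit) mult_le_cancel_left1)
  moreover have "b * X n \<ge> 0" "a * Y n \<ge> 0" using Suc a2 bpos by simp_all
  ultimately show ?case unfolding XS YS by simp
qed

lemma X_Suc_gt: "X (Suc n) > X n"
proof -
  have "D * b * Y n \<ge> 0" using pos Dpos bpos by simp
  moreover have "a * X n \<ge> 2 * X n" using mult_right_mono[OF a2, of "X n"] pos[of n] by simp
  ultimately show ?thesis unfolding XS using pos[of n] by linarith
qed

lemma X_mono: "m < n \<Longrightarrow> X m < X n"
  using X_Suc_gt by (metis lift_Suc_mono_less)

lemma add: "X (m + n) = X m * X n + D * Y m * Y n \<and> Y (m + n) = X m * Y n + Y m * X n"
proof (induction n)
  case 0 then show ?case by simp
next
  case (Suc n)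
  then show ?case unfolding add_Suc_right XS YS by (simp add: algebra_simps)
qed

lemma descent: "x > 0 \<Longrightarrow> y \<ge> 0 \<Longrightarrow> x^2 - D*y^2 = 1 \<Longrightarrow> \<exists>n. X n = x \<and> Y n = y"
proof (induction "nat y" arbitrary: x y rule: less_induct)
  case less
  show ?case
  proof (cases "y = 0")
    case True
    then have "x^2 = 1" using less by simp
    then have "x = 1" using less(2) power2_eq_1_iff[of x] by auto
    then show ?thesis using True by (intro exI[of _ 0]) simp
  next
    case False
    then have ypos: "y > 0" using less by simp
    have yb: "y \<ge> b" using bmin[OF less(2) ypos less(4)] .
    define x' where "x' = x * a - D * y * b"
    define y' where "y' = a * y - x * b"
    have n': "x'^2 - D*y'^2 = 1"
    proof -
      have "x'^2 - D*y'^2 = (x^2 - D*y^2) * (a^2 - D*b^2)"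
        unfolding x'_def y'_def by (simp add: power2_eq_square algebra_simps)
      then show ?thesis using less(4) ab by simp
    qed
    have x2: "x^2 = 1 + D*y^2" using less(4) by simp
    have a2': "a^2 = 1 + D*b^2" using ab by simp
    have "(x*a)^2 = (1 + D*y^2)*(1+D*b^2)"
      by (simp add: power_mult_distrib x2 a2')
    also have "\<dots> > (D*y*b)^2" using Dpos
      by (simp add: power_mult_distrib algebra_simps power2_eq_square)
         (smt (verit) mult_nonneg_nonneg zero_le_square)
    finally have "(D*y*b)^2 < (x*a)^2" .
    then have "D*y*b < x*a" using less(2) apos
      by (meson power_less_imp_less_base mult_pos_pos less_le)
    then have x'pos: "x' > 0" unfolding x'_def by simp
    have "(x*b)^2 = (1 + D*y^2)*b^2" by (simp add: power_mult_distrib x2)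
    also have "\<dots> \<le> (1 + D*b^2)*y^2" using yb bpos Dpos
      by (simp add: algebra_simps power_mono)
    also have "\<dots> = (a*y)^2" by (simp add: power_mult_distrib a2')
    finally have "(x*b)^2 \<le> (a*y)^2" .
    moreover have "a*y \<ge> 0" using apos ypos by simp
    ultimately have "x*b \<le> a*y" by (rule power2_le_imp_le)
    then have y'nn: "y' \<ge> 0" unfolding y'_def by simp
    have "b * x' + a * y' = y * (a^2 - D*b^2)" unfolding x'_def y'_def
      by (simp add: algebra_simps power2_eq_square)
    then have yrec: "y = b * x' + a * y'" using ab by simp
    have "a * x' + D * b * y' = x * (a^2 - D*b^2)" unfolding x'_def y'_def
      by (simp add: algebra_simps power2_eq_square)
    then have xrec: "x = a * x' + D * b * y'" using ab by simp
    have "b * x' > 0" using bpos x'pos by simp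
    moreover have "a * y' \<ge> y'" using a2 y'nn by (simp add: mult_le_cancel_right1)
    ultimately have "y' < y" using yrec by linarith
    then have "nat y' < nat y" using y'nn by simp
    from less(1)[OF this x'pos y'nn n'] obtain n where "X n = x'" "Y n = y'" by blast
    then show ?thesis using xrec yrec by (intro exI[of _ "Suc n"]) (simp add: XS YS)
  qed
qed

lemma ring_step: fixes xms xm xs ym ys d :: int
  assumes h1: "xms = xm*xs + d*ym*ys" and h2: "d*ys^2 = xs^2 - 1"
  shows "xms*xs + d*(xm*ys + ym*xs)*ys = 2*xs*xms - xm"
proof -
  have "xms*xs + d*(xm*ys + ym*xs)*ys = xm*xs^2 + 2*d*ym*xs*ys + xm*(d*ys^2)"
    unfolding h1 by (simp add: algebra_simps power2_eq_square)
  also have "\<dots> = xm*xs^2 + 2*d*ym*xs*ys + xm*(xs^2 - 1)" unfolding h2 ..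
  also have "\<dots> = 2*xs*xms - xm" unfolding h1 by (simp add: algebra_simps power2_eq_square)
  finally show ?thesis .
qed

lemma X_step2: "X (m + 2*s) = 2 * X s * X (m + s) - X m"
proof -
  have m2: "m + 2*s = (m+s)+s" by simp
  have e1: "X (m + 2*s) = X (m+s) * X s + D * Y (m+s) * Y s" unfolding m2 using add[of "m+s" s] by blast
  have e2: "X (m+s) = X m * X s + D * Y m * Y s" using add[of m s] by blast
  have e3: "Y (m+s) = X m * Y s + Y m * X s" using add[of m s] by blast
  have e4: "D * Y s ^ 2 = X s ^ 2 - 1" using norm[of s] by simp
  show ?thesis unfolding e1 e3 by (rule ring_step[OF e2 e4])
qed

lemma X_odd_dvd: "X s dvd X ((2*t+1)*s)"
proof (induction t)
  case 0 then show ?case by simp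
next
  case (Suc t)
  have e: "(2*Suc t+1)*s = (2*t+1)*s + 2*s" "(2*t+1)*s + s = (2*t+2)*s" by (simp_all add: algebra_simps)
  have "X ((2*Suc t+1)*s) = 2 * X s * X ((2*t+1)*s + s) - X ((2*t+1)*s)"
    unfolding e(1) by (rule X_step2)
  also have "\<dots> = X s * (2 * X ((2*t+1)*s + s)) - X ((2*t+1)*s)" by simp
  finally have h: "X ((2*Suc t+1)*s) = X s * (2 * X ((2*t+1)*s + s)) - X ((2*t+1)*s)" .
  show ?case unfolding h by (rule dvd_diff[OF dvd_triv_left Suc.IH])
qed

lemma dblX: "X (2*n) = 2 * X n ^ 2 - 1"
proof -
  have nn: "2*n = n+n" by simp
  have "X (2*n) = X n * X n + D * Y n * Y n" unfolding nn using add[of n n] by blast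
  moreover have "D * Y n * Y n = X n ^ 2 - 1" using norm[of n] by (simp add: power2_eq_square)
  ultimately show ?thesis by (simp add: power2_eq_square)
qed

lemma dblY: "Y (2*n) = 2 * X n * Y n"
proof -
  have nn: "2*n = n+n" by simp
  have "Y (2*n) = X n * Y n + Y n * X n" unfolding nn using add[of n n] by blast
  then show ?thesis by simp
qed

lemma pow2_odd: "n > 0 \<Longrightarrow> \<exists>j r. n = 2^j * r \<and> odd (r::nat)"
proof (induction n rule: less_induct)
  case (less n)
  show ?case
  proof (cases "odd n")
    case True then show ?thesis by (intro exI[of _ 0] exI[of _ n]) simp
  next
    case False
    then have "even n" by simp
    then obtain m where m: "n = 2*m" by (rule evenE)
    have mn: "m < n" "m > 0" using m less.prems by simp_all
    obtain j r where "m = 2^j * r" "odd r" using less.IH[OF mn] by blast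
    then show ?thesis using m by (intro exI[of _ "Suc j"] exI[of _ r]) simp
  qed
qed

lemma prime_pow2: assumes "prime (X n)" shows "\<exists>j. n = 2^j"
proof -
  have "n > 0" using assms by (cases n) simp_all
  then obtain j r where jr: "n = 2^j * r" "odd r" using pow2_odd by blast
  show ?thesis
  proof (cases "r = 1")
    case True then show ?thesis using jr by auto
  next
    case False
    from jr(2) obtain t where t0: "r = 2*t+1" by (rule oddE)
    with False have t: "r = 2*t+1" "t > 0" by auto
    have d: "X (2^j) dvd X n" using X_odd_dvd[of "2^j" t] jr t by (simp add: mult.commute)
    have "(2::nat)^j > 0" by simp
    then have g1: "X (2^j) > 1" using X_mono[of 0 "2^j"] by simp
    have "2^j < n" using jr t by simp
    then have g2: "X (2^j) < X n" using X_mono by blast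
    have "X (2^j) \<ge> 0" using g1 by simp
    then have "X (2^j) = 1 \<or> X (2^j) = X n" using assms[unfolded prime_int_iff] d by blast
    then show ?thesis using g1 g2 by simp
  qed
qed

lemma X_pow2_mod: "\<exists>c. X (2^(i+1+t)) = X (2^i) * c + 1 \<or> X (2^(i+1+t)) = X (2^i) * c - 1"
proof (induction t)
  case 0
  have "X (2^(i+1)) = X (2^i) * (2 * X (2^i)) - 1" using dblX[of "2^i"]
    by (simp add: power2_eq_square)
  then show ?case by auto
next
  case (Suc t)
  then obtain c where c: "X (2^(i+1+t)) = X (2^i) * c + 1 \<or> X (2^(i+1+t)) = X (2^i) * c - 1" by blast
  have e: "X (2^(i+1+Suc t)) = 2 * X (2^(i+1+t)) ^ 2 - 1" using dblX[of "2^(i+1+t)"] by simp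
  from c show ?case
  proof
    assume h: "X (2^(i+1+t)) = X (2^i) * c + 1"
    have "X (2^(i+1+Suc t)) = X (2^i) * (2 * X (2^i) * c^2 + 4*c) + 1"
      unfolding e h by (simp add: power2_eq_square algebra_simps)
    then show ?thesis by blast
  next
    assume h: "X (2^(i+1+t)) = X (2^i) * c - 1"
    have "X (2^(i+1+Suc t)) = X (2^i) * (2 * X (2^i) * c^2 - 4*c) + 1"
      unfolding e h by (simp add: power2_eq_square algebra_simps)
    then show ?thesis by blast
  qed
qed

lemma X_pow2_coprime: assumes "i < l" shows "coprime (X (2^i)) (X (2^l))"
proof -
  obtain t where l: "l = i + 1 + t" using assms less_imp_Suc_add by fastforce
  obtain c where c: "X (2^l) = X (2^i) * c + 1 \<or> X (2^l) = X (2^i) * c - 1"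
    using X_pow2_mod[of i t] l by blast
  show ?thesis
  proof (rule coprimeI)
    fix d assume d1: "d dvd X (2^i)" and d2: "d dvd X (2^l)"
    have "d dvd X (2^i) * c" using d1 by simp
    then have dd: "d dvd X (2^l) - X (2^i) * c" using d2 by (rule dvd_diff[rotated])
    from c have "X (2^l) - X (2^i) * c = 1 \<or> X (2^l) - X (2^i) * c = -1" by auto
    then have "d dvd 1" using dd by (metis dvd_minus_iff)
    then show "is_unit d" by simp
  qed
qed

lemma Y_pow2_dvd: "Y (2^(i+1)) dvd Y (2^(i+1+t))"
proof (induction t)
  case 0 then show ?case by simp
next
  case (Suc t)
  have "Y (2^(i+1+Suc t)) = 2 * X (2^(i+1+t)) * Y (2^(i+1+t))" using dblY[of "2^(i+1+t)"] by simp
  then show ?case using Suc by simp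
qed

lemma X_dvd_Y: assumes "i < l" shows "X (2^i) dvd Y (2^l)"
proof -
  obtain t where l: "l = i + 1 + t" using assms less_imp_Suc_add by fastforce
  have "Y (2^(i+1)) = 2 * X (2^i) * Y (2^i)" using dblY[of "2^i"] by simp
  then have "X (2^i) dvd Y (2^(i+1))" by simp
  then show ?thesis using Y_pow2_dvd[of i t] l dvd_trans by blast
qed

lemma count: assumes "prime (X n)" "Y n = int y" "y > 0"
  shows "\<exists>j. n = 2^j \<and> j \<le> card {q::nat. prime q \<and> q dvd y}"
proof -
  obtain j where j: "n = 2^j" using prime_pow2[OF assms(1)] by blast
  define f where "f i = (SOME q::nat. prime q \<and> q dvd nat (X (2^i)))" for i
  have fp: "prime (f i) \<and> int (f i) dvd X (2^i)" for i
  proof -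
    have "(2::nat)^i > 0" by simp
    then have g1: "X (2^i) > 1" using X_mono[of 0 "2^i"] by simp
    then have "nat (X (2^i)) \<noteq> 1" by simp
    then obtain q::nat where "prime q" "q dvd nat (X (2^i))" using prime_factor_nat by blast
    then have "prime (f i) \<and> f i dvd nat (X (2^i))" unfolding f_def
      using someI[of "\<lambda>q. prime q \<and> q dvd nat (X (2^i))" q] by blast
    moreover have "int (nat (X (2^i))) = X (2^i)" using g1 by simp
    ultimately show ?thesis by (metis of_nat_dvd_iff)
  qed
  have sub: "f ` {..<j} \<subseteq> {q::nat. prime q \<and> q dvd y}"
  proof
    fix q assume "q \<in> f ` {..<j}"
    then obtain i where i: "i < j" "q = f i" by auto
    have "X (2^i) dvd Y (2^j)" using X_dvd_Y[OF i(1)] .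
    then have "int q dvd int y" using fp[of i] i assms(2) j dvd_trans by metis
    then show "q \<in> {q::nat. prime q \<and> q dvd y}" using fp[of i] i by simp
  qed
  have inj: "inj_on f {..<j}"
  proof (rule inj_onI)
    fix i l assume il: "i \<in> {..<j}" "l \<in> {..<j}" "f i = f l"
    show "i = l"
    proof (rule ccontr)
      assume "i \<noteq> l"
      then have "i < l \<or> l < i" by arith
      then have cop: "coprime (X (2^i)) (X (2^l))" using X_pow2_coprime
        by (metis coprime_commute)
      have "int (f i) dvd X (2^i)" "int (f i) dvd X (2^l)" using fp[of i] fp[of l] il(3) by auto
      then have "is_unit (int (f i))" using cop coprime_common_divisor by blast
      then show False using fp[of i] by simp
    qed
  qed
  have fin: "finite {q::nat. prime q \<and> q dvd y}" using assms(3) by simp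
  have "j = card (f ` {..<j})" using card_image[OF inj] by simp
  also have "\<dots> \<le> card {q::nat. prime q \<and> q dvd y}" by (rule card_mono[OF fin sub])
  finally show ?thesis using j by blast
qed

end

lemma fund_exists:
  fixes D x y :: int
  assumes "D > 0" "x > 0" "y > 0" "x^2 - D*y^2 = 1"
  shows "\<exists>a b. pellf D a b"
proof -
  define P where "P n = (n > 0 \<and> (\<exists>x::int. x > 0 \<and> x^2 - D*(int n)^2 = 1))" for n :: nat
  have "P (nat y)" unfolding P_def using assms by auto
  then have Pm: "P (LEAST n. P n)" by (rule LeastI)
  then obtain a where a: "a > 0" "a^2 - D*(int (LEAST n. P n))^2 = 1" unfolding P_def by blast
  have "pellf D a (int (LEAST n. P n))"
  proof
    show "D > 0" "a > 0" by (fact assms(1)) (fact a(1))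
    show "a^2 - D*(int (LEAST n. P n))^2 = 1" by (fact a(2))
    show "int (LEAST n. P n) > 0" using Pm unfolding P_def by simp
    fix x' y' :: int assume h: "x' > 0" "y' > 0" "x'^2 - D*y'^2 = 1"
    then have "P (nat y')" unfolding P_def by auto
    then have "(LEAST n. P n) \<le> nat y'" by (rule Least_le)
    then show "int (LEAST n. P n) \<le> y'" using h by simp
  qed
  then show ?thesis by blast
qed

definition fund :: "int \<Rightarrow> int \<times> int" where
  "fund D = (SOME ab. pellf D (fst ab) (snd ab))"

lemma fund: "pellf D a b \<Longrightarrow> pellf D (fst (fund D)) (snd (fund D))"
  unfolding fund_def by (rule someI[where x="(a,b)"]) simp

lemma Pplus_ge: assumes "n \<ge> 2" "prime q" "q dvd n" shows "q \<le> Pplus n"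
proof -
  have "q \<in> prime_factors n" using assms by (auto simp: prime_factors_dvd)
  then show ?thesis unfolding Pplus_def using assms(1) by simp
qed

lemma squarefree_prod: assumes "squarefree (d::nat)" shows "d = \<Prod>(prime_factors d)"
proof -
  have "d \<noteq> 0" using assms by (metis not_squarefree_0)
  then have "d = (\<Prod>p \<in> prime_factors d. p ^ multiplicity p d)" using prime_factorization_nat by simp
  also have "\<dots> = (\<Prod>p \<in> prime_factors d. p)"
  proof (rule prod.cong)
    fix p assume "p \<in> prime_factors d"
    moreover have "\<forall>p\<in>prime_factors d. multiplicity p d = 1"
      using squarefree_factorial_semiring'[OF \<open>d \<noteq> 0\<close>] assms by blast
    ultimately show "p ^ multiplicity p d = p" by simp
  qed simp
  finally show ?thesis by simp
qed

lemma per_prime: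
  fixes p :: nat and x :: real
  assumes p: "prime p" and px: "real (Pplus (p^2 - 1)) \<le> x"
  defines "S \<equiv> {q::nat. prime q \<and> real q \<le> x}"
  shows "p \<in> (\<lambda>(d,j). nat (fst (pxy (int d) (fst (fund (int d))) (snd (fund (int d))) (2^j))))
            ` ((\<lambda>A. \<Prod>A) ` Pow S \<times> {..card S})"
proof -
  define n0 where "n0 = p^2 - 1"
  have p2: "p \<ge> 2" using p prime_ge_2_nat by blast
  then have "p^2 \<ge> 4" using power_mono[of 2 p 2] by simp
  then have n0ge: "n0 \<ge> 3" unfolding n0_def by simp
  define d where "d = squarefree_part n0"
  define y where "y = square_part n0"
  have dec: "n0 = d * y^2" unfolding d_def y_def by (rule squarefree_decompose)
  have dpos: "d > 0" using n0ge dec by (cases d) auto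
  have ypos: "y > 0" using n0ge dec by (cases y) auto
  have inS: "q \<in> S" if "prime q" "q dvd n0" for q
  proof -
    have "q \<le> Pplus n0" using Pplus_ge[of n0 q] that n0ge by simp
    then have "real q \<le> x" using px unfolding n0_def by linarith
    then show ?thesis unfolding S_def using that by simp
  qed
  have dT: "d \<in> (\<lambda>A. \<Prod>A) ` Pow S"
  proof
    show "d = \<Prod>(prime_factors d)" unfolding d_def by (rule squarefree_prod) simp
    have "prime_factors d \<subseteq> S"
    proof
      fix q assume "q \<in> prime_factors d"
      then have "prime q" "q dvd d" by (auto simp: prime_factors_dvd)
      moreover have "d dvd n0" using dec by simp
      ultimately show "q \<in> S" using inS dvd_trans by blast
    qed
    then show "prime_factors d \<in> Pow S" by simp
  qed
  have eq: "(int p)^2 - int d * (int y)^2 = 1"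
  proof -
    have "p^2 = d * y^2 + 1" using dec p2 unfolding n0_def
      by (metis \<open>4 \<le> p^2\<close> le_add_diff_inverse2 le_trans one_le_numeral)
    then have "int (p^2) = int (d * y^2 + 1)" by simp
    then show ?thesis by simp
  qed
  have "\<exists>a b. pellf (int d) a b"
    by (rule fund_exists[of _ "int p" "int y"]) (use dpos ypos p2 eq in auto)
  then obtain a b where "pellf (int d) a b" by blast
  then have pf: "pellf (int d) (fst (fund (int d))) (snd (fund (int d)))" by (rule fund)
  interpret pellf "int d" "fst (fund (int d))" "snd (fund (int d))" by (rule pf)
  obtain n where n: "X n = int p" "Y n = int y" using descent[of "int p" "int y"] eq p2 by auto
  have "prime (X n)" using n p by simp
  then obtain j where j: "n = 2^j" "j \<le> card {q::nat. prime q \<and> q dvd y}"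
    using count[OF _ n(2) ypos] by blast
  have "{q::nat. prime q \<and> q dvd y} \<subseteq> S"
  proof
    fix q assume "q \<in> {q::nat. prime q \<and> q dvd y}"
    then have "prime q" "q dvd y" by auto
    moreover have "y dvd n0" using dec by (simp add: power2_eq_square)
    ultimately show "q \<in> S" using inS dvd_trans by blast
  qed
  moreover have "finite S"
  proof (rule finite_subset)
    show "S \<subseteq> {..nat \<lceil>x\<rceil>}"
    proof
      fix q assume "q \<in> S"
      then have "real q \<le> x" unfolding S_def by simp
      then have "\<lceil>real q\<rceil> \<le> \<lceil>x\<rceil>" by (rule ceiling_mono)
      then show "q \<in> {..nat \<lceil>x\<rceil>}" by simp
    qed
  qed simp
  ultimately have "card {q::nat. prime q \<and> q dvd y} \<le> card S" by (rule card_mono[rotated])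
  then have jk: "j \<le> card S" using j by simp
  have "p = nat (X (2^j))" using n j by simp
  then have "p = nat (fst (pxy (int d) (fst (fund (int d))) (snd (fund (int d))) (2^j)))"
    unfolding X_def .
  then show ?thesis using dT jk by (intro image_eqI[where x="(d,j)"]) auto
qed

lemma finite_S: "finite {q::nat. prime q \<and> real q \<le> x}"
proof (rule finite_subset)
  show "{q::nat. prime q \<and> real q \<le> x} \<subseteq> {..nat \<lceil>x\<rceil>}"
  proof
    fix q assume "q \<in> {q::nat. prime q \<and> real q \<le> x}"
    then have "real q \<le> x" by simp
    then have "\<lceil>real q\<rceil> \<le> \<lceil>x\<rceil>" by (rule ceiling_mono)
    then show "q \<in> {..nat \<lceil>x\<rceil>}" by simp
  qed
qed simp

lemma num_bound: "(2::nat)^k * (k+1) \<le> 3 * 7 ^ (1 + 2*k)"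
proof -
  have "k + 1 \<le> 2^k" using Suc_leI[OF less_exp[of k]] by simp
  then have "(2::nat)^k * (k+1) \<le> 2^k * 2^k" by (rule mult_left_mono) simp
  also have "\<dots> = 4^k" by (simp add: power_mult_distrib[symmetric])
  also have "\<dots> \<le> 49^k" by (rule power_mono) simp_all
  also have "\<dots> = 7^(2*k)" by (simp add: power_mult)
  also have "\<dots> \<le> 3 * 7^(1+2*k)" by simp
  finally show ?thesis .
qed

theorem proposition8p7:
  fixes x :: real
  shows "finite {p::nat. prime p \<and> real (Pplus (p^2 - 1)) \<le> x} \<and>
         real (card {p::nat. prime p \<and> real (Pplus (p^2 - 1)) \<le> x})
           \<le> 3 * 7 ^ (1 + 2 * prime_pi x)"
proof -
  define S where "S = {q::nat. prime q \<and> real q \<le> x}"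
  define A where "A = {p::nat. prime p \<and> real (Pplus (p^2 - 1)) \<le> x}"
  define g where "g = (\<lambda>(d,j). nat (fst (pxy (int d) (fst (fund (int d))) (snd (fund (int d))) (2^j))))"
  define T where "T = (\<lambda>A. \<Prod>A) ` Pow S"
  have finS: "finite S" unfolding S_def by (rule finite_S)
  have sub: "A \<subseteq> g ` (T \<times> {..card S})"
    unfolding A_def g_def T_def S_def using per_prime by blast
  have finT: "finite T" unfolding T_def using finS by simp
  have finG: "finite (g ` (T \<times> {..card S}))" using finT by simp
  have finA: "finite A" using finite_subset[OF sub finG] .
  have "card A \<le> card (g ` (T \<times> {..card S}))" by (rule card_mono[OF finG sub])
  also have "\<dots> \<le> card (T \<times> {..card S})" by (rule card_image_le) (use finT in simp)
  also have "\<dots> = card T * (card S + 1)" by (simp add: card_cartesian_product)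
  also have "card T \<le> 2 ^ card S"
    unfolding T_def using card_image_le[of "Pow S" "\<lambda>A. \<Prod>A"] finS by (simp add: card_Pow)
  then have "card T * (card S + 1) \<le> 2 ^ card S * (card S + 1)" by (rule mult_right_mono) simp
  also have "\<dots> \<le> 3 * 7 ^ (1 + 2 * card S)" by (rule num_bound)
  finally have "card A \<le> 3 * 7 ^ (1 + 2 * card S)" .
  then have "real (card A) \<le> real (3 * 7 ^ (1 + 2 * card S))" by (simp only: of_nat_le_iff)
  moreover have "prime_pi x = card S" unfolding prime_pi_def S_def ..
  ultimately show ?thesis using finA unfolding A_def by simp
qed

end
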